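(* Let $k\ge 2$ be an integer. If $G$ is a $(k+1)$-regular graph having a $k$-conversion set of size $k$, then the order of $G$ is at most $2k+2$. Moreover, for every $k\ge 2$ there exists a $(k+1)$-regular graph of order $2k+2$ which has a $k$-conversion set of size $k$.
   Context: For a graph $G=(V,E)$, a positive integer $k$ and a set $S_0\subseteq V$, the irreversible $k$-threshold conversion process is defined by: for $t=1,2,\dots$, $S_t$ is obtained from $S_{t-1}$ by adjoining all vertices having at least $k$ neighbours in $S_{t-1}$. The set $S_0$ is a $k$-conversion set of $G$ if $S_t=V(G)$ for some $t\ge 0$. *)

theory Defs
  imports Main
begin

definition simple_graph :: "'a set \<Rightarrow> ('a \<Rightarrow> 'a \<Rightarrow> bool) \<Rightarrow> bool" where
  "simple_graph V E \<longleftrightarrow> finite V \<and> (\<forall>x y. E x y \<longrightarrow> x \<in> V \<and> y \<in> V)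
     \<and> (\<forall>x y. E x y \<longrightarrow> E y x) \<and> (\<forall>x. \<not> E x x)"

definition neighbours :: "'a set \<Rightarrow> ('a \<Rightarrow> 'a \<Rightarrow> bool) \<Rightarrow> 'a \<Rightarrow> 'a set" where
  "neighbours V E v = {u \<in> V. E v u}"

definition regular :: "'a set \<Rightarrow> ('a \<Rightarrow> 'a \<Rightarrow> bool) \<Rightarrow> nat \<Rightarrow> bool" where
  "regular V E r \<longleftrightarrow> (\<forall>v \<in> V. card (neighbours V E v) = r)"

definition conv_step :: "'a set \<Rightarrow> ('a \<Rightarrow> 'a \<Rightarrow> bool) \<Rightarrow> nat \<Rightarrow> 'a set \<Rightarrow> 'a set" where
  "conv_step V E k S = S \<union> {v \<in> V. card (neighbours V E v \<inter> S) \<ge> k}"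

definition conversion_set :: "'a set \<Rightarrow> ('a \<Rightarrow> 'a \<Rightarrow> bool) \<Rightarrow> nat \<Rightarrow> 'a set \<Rightarrow> bool" where
  "conversion_set V E k S0 \<longleftrightarrow> S0 \<subseteq> V \<and> (\<exists>t. (conv_step V E k ^^ t) S0 = V)"

end

theory Submission
  imports Defs
begin

lemma arith_int: "(a+1)*(k+1) = p + 2*(k+1) \<Longrightarrow> 2*k*a \<le> p + 2*k*(k::int) \<Longrightarrow> k \<ge> 2 \<Longrightarrow> a \<le> 2*k+1"
proof -
  assume h: "(a+1)*(k+1) = p + 2*(k+1)" "2*k*a \<le> p + 2*k*(k::int)" "k \<ge> 2"
  then have "a*(k-1) \<le> (2*k+1)*(k-1)" by (simp add: algebra_simps)
  then show ?thesis using h(3) by (simp add: mult_le_cancel_right)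
qed
lemma arith_nat: "(a+1)*(k+1) = p + 2*(k+1) \<Longrightarrow> 2*k*a \<le> p + 2*k*(k::nat) \<Longrightarrow> k \<ge> 2 \<Longrightarrow> a \<le> 2*k+1"
proof -
  assume h: "(a+1)*(k+1) = p + 2*(k+1)" "2*k*a \<le> p + 2*k*(k::nat)" "k \<ge> 2"
  have "int ((a+1)*(k+1)) = int (p + 2*(k+1))" using h(1) by (rule arg_cong)
  then have 1: "(int a+1)*(int k+1) = int p + 2*(int k+1)" by (simp only: of_nat_add of_nat_mult of_nat_1 of_nat_numeral)
  have "int (2*k*a) \<le> int (p + 2*k*k)" using h(2) by (simp only: of_nat_le_iff)
  then have 2: "2*int k*int a \<le> int p + 2*int k*int k" by (simp only: of_nat_add of_nat_mult of_nat_1 of_nat_numeral)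
  have "int a \<le> 2*int k+1" using arith_int[OF 1 2] h(3) by simp
  then show ?thesis by simp
qed

inductive reach :: "'a set \<Rightarrow> ('a \<Rightarrow> 'a \<Rightarrow> bool) \<Rightarrow> nat \<Rightarrow> 'a set \<Rightarrow> 'a set \<Rightarrow> bool"
  for V E k S where
  base: "reach V E k S S"
| step: "reach V E k S A \<Longrightarrow> v \<in> V \<Longrightarrow> v \<notin> A \<Longrightarrow> card (neighbours V E v \<inter> A) \<ge> k
         \<Longrightarrow> reach V E k S (insert v A)"

definition prs :: "('a \<Rightarrow> 'a \<Rightarrow> bool) \<Rightarrow> 'a set \<Rightarrow> ('a \<times> 'a) set" where
  "prs E A = {(u,w). u \<in> A \<and> w \<in> A \<and> E u w}"

lemma prs_finite: "finite A \<Longrightarrow> finite (prs E A)"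
  unfolding prs_def by (rule finite_subset[of _ "A \<times> A"]) auto

lemma prs_insert:
  assumes g: "simple_graph V E" and v: "v \<notin> A" and A: "A \<subseteq> V"
  shows "card (prs E (insert v A)) = card (prs E A) + 2 * card (neighbours V E v \<inter> A)"
proof -
  have fV: "finite V" using g by (simp add: simple_graph_def)
  have fA: "finite A" using A fV finite_subset by blast
  let ?N = "neighbours V E v \<inter> A"
  have fN: "finite ?N" using fA by simp
  have eq: "prs E (insert v A) = prs E A \<union> ((\<lambda>w. (v,w)) ` ?N) \<union> ((\<lambda>u. (u,v)) ` ?N)"
    using g A unfolding prs_def neighbours_def simple_graph_def by auto
  have d1: "prs E A \<inter> ((\<lambda>w. (v,w)) ` ?N) = {}" using v unfolding prs_def by auto
  have d2: "(prs E A \<union> ((\<lambda>w. (v,w)) ` ?N)) \<inter> ((\<lambda>u. (u,v)) ` ?N) = {}"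
    using v unfolding prs_def by auto
  have c1: "card ((\<lambda>w. (v,w)) ` ?N) = card ?N" by (rule card_image) (auto simp: inj_on_def)
  have c2: "card ((\<lambda>u. (u,v)) ` ?N) = card ?N" by (rule card_image) (auto simp: inj_on_def)
  show ?thesis
    unfolding eq
    apply (subst card_Un_disjoint[OF _ _ d2])
      apply (simp add: prs_finite fA fN)
     apply (simp add: fN)
    apply (subst card_Un_disjoint[OF _ _ d1])
      apply (simp add: prs_finite fA)
     apply (simp add: fN)
    using c1 c2 by simp
qed

lemma reach_inv:
  assumes "reach V E k S A" and g: "simple_graph V E" and S: "S \<subseteq> V"
  shows "A \<subseteq> V \<and> card (prs E A) + 2 * k * card S \<ge> 2 * k * card A"
  using assms(1)
proof induction
  case base
  then show ?case using S by simp
next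
  case (step A v)
  have fA: "finite A" using step g finite_subset unfolding simple_graph_def by blast
  have "card (prs E (insert v A)) = card (prs E A) + 2 * card (neighbours V E v \<inter> A)"
    using prs_insert[OF g step(3)] step by blast
  moreover have "card (insert v A) = card A + 1" using fA step(3) by simp
  ultimately show ?case using step by (auto simp: algebra_simps)
qed

lemma reach_union:
  assumes g: "simple_graph V E" and fC: "finite C"
  shows "C \<subseteq> {v \<in> V. card (neighbours V E v \<inter> A) \<ge> k} \<Longrightarrow> reach V E k S A \<Longrightarrow> reach V E k S (A \<union> C)"
  using fC
proof (induction C)
  case empty
  then show ?case by simp
next
  case (insert x C)
  then have r: "reach V E k S (A \<union> C)" by simp
  show ?case
  proof (cases "x \<in> A \<union> C")
    case True
    then have "A \<union> insert x C = A \<union> C" by auto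
    then show ?thesis using r by simp
  next
    case False
    have fV: "finite V" using g by (simp add: simple_graph_def)
    have "finite (neighbours V E x)" using fV unfolding neighbours_def by simp
    then have "card (neighbours V E x \<inter> A) \<le> card (neighbours V E x \<inter> (A \<union> C))"
      by (intro card_mono) auto
    moreover have "card (neighbours V E x \<inter> A) \<ge> k" "x \<in> V" using insert by auto
    ultimately have "reach V E k S (insert x (A \<union> C))"
      using reach.step[OF r _ False] by simp
    then show ?thesis by simp
  qed
qed

lemma reach_conv:
  assumes g: "simple_graph V E" and r: "reach V E k S A"
  shows "reach V E k S (conv_step V E k A)"
proof -
  have fV: "finite V" using g by (simp add: simple_graph_def)
  have "finite {v \<in> V. card (neighbours V E v \<inter> A) \<ge> k}" using fV by simp
  from reach_union[OF g this _ r] show ?thesis unfolding conv_step_def by simp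
qed

lemma reach_iter:
  assumes g: "simple_graph V E"
  shows "reach V E k S ((conv_step V E k ^^ t) S)"
  by (induction t) (auto intro: reach.base reach_conv[OF g])

lemma part1:
  assumes k2: "k \<ge> 2" and g: "simple_graph V E" and reg: "regular V E (k + 1)"
    and cs: "conversion_set V E k S" and cS: "card S = k"
  shows "card V \<le> 2 * k + 2"
proof -
  have fV: "finite V" using g by (simp add: simple_graph_def)
  have SV: "S \<subseteq> V" and "\<exists>t. (conv_step V E k ^^ t) S = V" using cs by (auto simp: conversion_set_def)
  then have rV: "reach V E k S V" using reach_iter[OF g] by metis
  have prsV: "prs E V = Sigma V (neighbours V E)"
    using g unfolding prs_def neighbours_def simple_graph_def by auto
  have cV: "card (prs E V) = card V * (k + 1)"
    unfolding prsV using fV reg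
    by (subst card_SigmaI) (auto simp: neighbours_def regular_def)
  show ?thesis
  proof (cases "V = S")
    case True then show ?thesis using cS by simp
  next
    case False
    from rV False obtain A v where rA: "reach V E k S A" and vV: "v \<in> V" and vA: "v \<notin> A"
      and VA: "V = insert v A"
      by (cases rule: reach.cases) auto
    have inv: "A \<subseteq> V" "card (prs E A) + 2 * k * k \<ge> 2 * k * card A"
      using reach_inv[OF rA g SV] cS by auto
    have fA: "finite A" using inv fV finite_subset by blast
    have "neighbours V E v \<inter> A = neighbours V E v"
      using g VA unfolding neighbours_def simple_graph_def by auto
    then have cN: "card (neighbours V E v \<inter> A) = k + 1" using reg vV by (simp add: regular_def)
    have "card (prs E V) = card (prs E A) + 2 * (k + 1)"
      using prs_insert[OF g vA inv(1)] cN VA by simp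
    moreover have "card V = card A + 1" using VA vA fA by simp
    ultimately have "(card A + 1) * (k + 1) = card (prs E A) + 2 * (k + 1)"
      using cV by simp
    from arith_nat[OF this _ k2] inv(2) have "card A \<le> 2 * k + 1" by (simp add: mult.commute)
    then show ?thesis using \<open>card V = card A + 1\<close> by simp
  qed
qed

definition GE :: "nat \<Rightarrow> nat \<Rightarrow> nat \<Rightarrow> bool" where
  "GE k i j \<longleftrightarrow> i < 2*k+2 \<and> j < 2*k+2 \<and> (i < k+1) \<noteq> (j < k+1)"

lemma part2:
  assumes k2: "k \<ge> 2"
  shows "simple_graph {0..<2*k+2} (GE k) \<and> regular {0..<2*k+2} (GE k) (k + 1) \<and> card {0..<2*k+2} = 2 * k + 2
            \<and> conversion_set {0..<2*k+2} (GE k) k {0..<k} \<and> card {0..<k} = k"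
proof -
  let ?V = "{0..<2*k+2}"
  have g: "simple_graph ?V (GE k)" unfolding simple_graph_def GE_def by auto
  have n1: "neighbours ?V (GE k) v = {k+1..<2*k+2}" if "v < k+1" for v
    using that unfolding neighbours_def GE_def by auto
  have n2: "neighbours ?V (GE k) v = {0..<k+1}" if "v \<ge> k+1" "v < 2*k+2" for v
    using that unfolding neighbours_def GE_def by auto
  have reg: "regular ?V (GE k) (k+1)"
    unfolding regular_def
  proof
    fix v assume "v \<in> ?V"
    then show "card (neighbours ?V (GE k) v) = k + 1"
    proof (cases "v < k+1")
      case True
      then show ?thesis by (subst n1) auto
    next
      case False
      then show ?thesis using \<open>v \<in> ?V\<close> by (subst n2) auto
    qed
  qed
  let ?A1 = "conv_step ?V (GE k) k {0..<k}"
  have A1: "v \<in> ?A1" if "v < 2*k+2" "v \<noteq> k" for v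
  proof (cases "v < k")
    case True then show ?thesis unfolding conv_step_def by auto
  next
    case False
    then have "v \<ge> k+1" using that by auto
    then have "neighbours ?V (GE k) v \<inter> {0..<k} = {0..<k}" using n2 that by auto
    then show ?thesis using that unfolding conv_step_def by auto
  qed
  have A1V: "?A1 \<subseteq> ?V" unfolding conv_step_def by auto
  have "neighbours ?V (GE k) k \<inter> ?A1 = {k+1..<2*k+2}" using n1[of k] A1 by auto
  then have kA2: "k \<in> conv_step ?V (GE k) k ?A1" unfolding conv_step_def by auto
  have "conv_step ?V (GE k) k ?A1 = ?V"
  proof
    show "conv_step ?V (GE k) k ?A1 \<subseteq> ?V" using A1V unfolding conv_step_def by auto
    show "?V \<subseteq> conv_step ?V (GE k) k ?A1"
    proof
      fix v assume "v \<in> ?V"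
      then show "v \<in> conv_step ?V (GE k) k ?A1"
        using kA2 A1[of v] unfolding conv_step_def[of _ _ _ ?A1] by (cases "v = k") auto
    qed
  qed
  then have "(conv_step ?V (GE k) k ^^ 2) {0..<k} = ?V" by (simp add: numeral_2_eq_2)
  then have "conversion_set ?V (GE k) k {0..<k}" unfolding conversion_set_def by auto
  then show ?thesis using g reg by simp
qed

theorem proposition3p2:
  fixes k :: nat
  assumes "k \<ge> 2"
  shows "(\<forall>(V :: 'a set) E S. simple_graph V E \<longrightarrow> regular V E (k + 1)
            \<longrightarrow> conversion_set V E k S \<longrightarrow> card S = k \<longrightarrow> card V \<le> 2 * k + 2)
       \<and> (\<exists>(V :: nat set) E S. simple_graph V E \<and> regular V E (k + 1) \<and> card V = 2 * k + 2
            \<and> conversion_set V E k S \<and> card S = k)"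
  using part1[OF assms] part2[OF assms] by blast

end
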